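(* Let $\boldsymbol{\sigma}\in\mathcal{G}_{\mathcal{N}|\mathcal{R}}$ be an extremal assemblage. Then every bipartite state $\rho^{AB}\in\mathcal{S}_{\boldsymbol{\sigma}}$, on $\mathcal{H}_A\otimes\mathcal{H}_B$ with $\mathcal{H}_A$ of any finite dimension, satisfies $E_{\mathrm{F}}(\rho^{AB})=S(\rho_{\boldsymbol{\sigma}})$.
   Context: Fix finite sets $\mathcal{N}$ (outcomes) and $\mathcal{R}$ (inputs) and a finite-dimensional Hilbert space $\mathcal{H}_B$. An assemblage is a tuple $\boldsymbol{\sigma}=(\sigma_{n|r})_{n\in\mathcal{N},r\in\mathcal{R}}$ of positive semidefinite operators on $\mathcal{H}_B$ such that $\rho_{\boldsymbol{\sigma}}:=\sum_{n}\sigma_{n|r}$ is independent of $r$ and has trace $1$; $\rho_{\boldsymbol{\sigma}}$ is called the marginal of $\boldsymbol{\sigma}$. The set $\mathcal{G}_{\mathcal{N}|\mathcal{R}}$ of all such assemblages is convex (convex combinations taken entrywise). An assemblage is extremal if it cannot be written as $p\boldsymbol{\sigma}^1+(1-p)\boldsymbol{\sigma}^2$ with $0<p<1$ and $\boldsymbol{\sigma}^1\neq\boldsymbol{\sigma}^2$ in $\mathcal{G}_{\mathcal{N}|\mathcal{R}}$. A state $\rho^{AB}$ on $\mathcal{H}_A\otimes\mathcal{H}_B$ ($\mathcal{H}_A$ any finite-dimensional space) realizes $\boldsymbol{\sigma}$ if for each $r\in\mathcal{R}$ there is a POVM $\{M_{n|r}\}_{n\in\mathcal{N}}$ on $\mathcal{H}_A$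 ($M_{n|r}\ge 0$, $\sum_n M_{n|r}=\mathbb{I}$) with $\sigma_{n|r}=\mathrm{Tr}_A[(M_{n|r}\otimes\mathbb{I}^B)\rho^{AB}]$ for all $n,r$; $\mathcal{S}_{\boldsymbol{\sigma}}$ is the set of all states realizing $\boldsymbol{\sigma}$. $S(\rho)=-\mathrm{Tr}(\rho\log_2\rho)$ is the von Neumann entropy. The entanglement of formation of a bipartite state is $E_{\mathrm{F}}(\rho^{AB})=\inf\{\sum_i p^i S(\mathrm{Tr}_A|\phi^i\rangle\langle\phi^i|) : \sum_i p^i|\phi^i\rangle\langle\phi^i|=\rho^{AB},\ p^i\ge 0,\ \sum_i p^i=1\}$, the infimum being over finite decompositions into pure states. *)

theory Defs
  imports "HOL-Analysis.Analysis"
begin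

text \<open>Operators on a finite-dimensional Hilbert space with orthonormal basis indexed by
  a finite type 'i are complex matrices of type complex^'i^'i.\<close>

type_synonym 'i op = "complex^'i^'i"

definition adjoint :: "'i::finite op \<Rightarrow> 'i op" where
  "adjoint M = (\<chi> i j. cnj (M $ j $ i))"

definition hermitian :: "'i::finite op \<Rightarrow> bool" where
  "hermitian M \<longleftrightarrow> adjoint M = M"

definition psd :: "'i::finite op \<Rightarrow> bool" where
  "psd M \<longleftrightarrow> hermitian M \<and>
     (\<forall>v :: complex^'i. 0 \<le> Re (\<Sum>i\<in>UNIV. \<Sum>j\<in>UNIV. cnj (v $ i) * M $ i $ j * v $ j))"

definition density :: "'i::finite op \<Rightarrow> bool" where
  "density \<rho> \<longleftrightarrow> psd \<rho> \<and> trace \<rho> = 1"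

definition unitary :: "'i::finite op \<Rightarrow> bool" where
  "unitary U \<longleftrightarrow> adjoint U ** U = mat 1"

definition diag_op :: "('i::finite \<Rightarrow> real) \<Rightarrow> 'i op" where
  "diag_op l = (\<chi> i j. if i = j then complex_of_real (l i) else 0)"

text \<open>von Neumann entropy S(rho) = - Tr (rho log2 rho) = - sum of l log2 l over the
  eigenvalues l of rho (counted with multiplicity), computed from a spectral decomposition
  rho = U diag(l) U^dagger (convention 0 log 0 = 0, automatic here).\<close>
definition vn_entropy :: "'i::finite op \<Rightarrow> real" where
  "vn_entropy \<rho> = (SOME s. \<exists>U l. unitary U \<and> \<rho> = U ** diag_op l ** adjoint U \<and>
       s = - (\<Sum>i\<in>UNIV. l i * log 2 (l i)))"

definition kron :: "'a::finite op \<Rightarrow> 'b::finite op \<Rightarrow> ('a \<times> 'b) op" where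
  "kron A B = (\<chi> p q. A $ fst p $ fst q * B $ snd p $ snd q)"

definition ptrace_A :: "('a::finite \<times> 'b::finite) op \<Rightarrow> 'b op" where
  "ptrace_A M = (\<chi> b b'. \<Sum>a\<in>UNIV. M $ (a, b) $ (a, b'))"

definition proj :: "complex^'i::finite \<Rightarrow> 'i op" where
  "proj \<phi> = (\<chi> i j. \<phi> $ i * cnj (\<phi> $ j))"

definition unit_vec :: "complex^'i::finite \<Rightarrow> bool" where
  "unit_vec \<phi> \<longleftrightarrow> (\<Sum>i\<in>UNIV. cnj (\<phi> $ i) * \<phi> $ i) = 1"

definition ent_formation :: "('a::finite \<times> 'b::finite) op \<Rightarrow> real" where
  "ent_formation \<rho> = Inf {(\<Sum>i<k. p i * vn_entropy (ptrace_A (proj (\<phi> i)))) | (k::nat) (p::nat \<Rightarrow> real) (\<phi>::nat \<Rightarrow> complex^('a \<times> 'b)).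
       (\<forall>i<k. 0 \<le> p i \<and> unit_vec (\<phi> i)) \<and> (\<Sum>i<k. p i) = 1 \<and>
       (\<Sum>i<k. p i *\<^sub>R proj (\<phi> i)) = \<rho>}"

text \<open>Assemblages: outcomes 'n, inputs 'r (finite types), system B with basis 'b.\<close>
definition assemblage :: "('n::finite \<Rightarrow> 'r::finite \<Rightarrow> 'b::finite op) \<Rightarrow> bool" where
  "assemblage \<sigma> \<longleftrightarrow> (\<forall>n r. psd (\<sigma> n r)) \<and>
     (\<forall>r r'. (\<Sum>n\<in>UNIV. \<sigma> n r) = (\<Sum>n\<in>UNIV. \<sigma> n r')) \<and>
     (\<forall>r. trace (\<Sum>n\<in>UNIV. \<sigma> n r) = 1)"

definition marginal :: "('n::finite \<Rightarrow> 'r::finite \<Rightarrow> 'b::finite op) \<Rightarrow> 'b op" where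
  "marginal \<sigma> = (\<Sum>n\<in>UNIV. \<sigma> n (SOME r. True))"

definition extremal_assemblage :: "('n::finite \<Rightarrow> 'r::finite \<Rightarrow> 'b::finite op) \<Rightarrow> bool" where
  "extremal_assemblage \<sigma> \<longleftrightarrow> assemblage \<sigma> \<and>
     \<not> (\<exists>p \<sigma>1 \<sigma>2. 0 < p \<and> p < 1 \<and> assemblage \<sigma>1 \<and> assemblage \<sigma>2 \<and> \<sigma>1 \<noteq> \<sigma>2 \<and>
          (\<forall>n r. \<sigma> n r = p *\<^sub>R \<sigma>1 n r + (1 - p) *\<^sub>R \<sigma>2 n r))"

definition povm :: "('n::finite \<Rightarrow> 'a::finite op) \<Rightarrow> bool" where
  "povm M \<longleftrightarrow> (\<forall>n. psd (M n)) \<and> (\<Sum>n\<in>UNIV. M n) = mat 1"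

definition realizes :: "('a::finite \<times> 'b::finite) op \<Rightarrow> ('n::finite \<Rightarrow> 'r::finite \<Rightarrow> 'b op) \<Rightarrow> bool" where
  "realizes \<rho> \<sigma> \<longleftrightarrow> density \<rho> \<and>
     (\<forall>r. \<exists>M :: 'n \<Rightarrow> 'a op. povm M \<and>
        (\<forall>n. \<sigma> n r = ptrace_A (kron (M n) (mat 1) ** \<rho>)))"

end

theory Submission
  imports Defs
begin

definition qf :: "'i::finite op \<Rightarrow> complex^'i \<Rightarrow> complex" where
  "qf M v = (\<Sum>i\<in>UNIV. \<Sum>j\<in>UNIV. cnj (v $ i) * M $ i $ j * v $ j)"

lemma psd_iff: "psd M \<longleftrightarrow> hermitian M \<and> (\<forall>v. 0 \<le> Re (qf M v))"
  by (simp add: psd_def qf_def)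

lemma hermitian_iff: "hermitian M \<longleftrightarrow> (\<forall>i j. cnj (M$j$i) = M$i$j)"
  unfolding hermitian_def adjoint_def vec_eq_iff by auto

lemma sc_comp: "(c *\<^sub>R A) $ i $ j = of_real c * (A $ i $ j :: complex)"
  by (simp only: vector_scaleR_component) (simp add: scaleR_conv_of_real)

lemma sc2: "c *\<^sub>R (z::complex) = of_real c * z"
  by (simp add: scaleR_conv_of_real)

lemma qf_add: "qf (A + B) v = qf A v + qf B v"
  by (simp add: qf_def algebra_simps sum.distrib)
lemma qf_diff: "qf (A - B) v = qf A v - qf B v"
  by (simp add: qf_def algebra_simps sum_subtractf)
lemma qf_scaleR: "qf (c *\<^sub>R A) v = of_real c * qf A v"
  by (simp add: qf_def sum_distrib_left sc_comp sc2 algebra_simps)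
lemma qf_sum: "finite J \<Longrightarrow> qf (\<Sum>j\<in>J. A j) v = (\<Sum>j\<in>J. qf (A j) v)"
  by (induction J rule: finite_induct) (simp_all add: qf_add, simp add: qf_def)

lemma hermitian_add: "hermitian A \<Longrightarrow> hermitian B \<Longrightarrow> hermitian (A + B)"
  by (simp add: hermitian_iff)
lemma hermitian_diff: "hermitian A \<Longrightarrow> hermitian B \<Longrightarrow> hermitian (A - B)"
  by (simp add: hermitian_iff)
lemma hermitian_scaleR: "hermitian A \<Longrightarrow> hermitian (c *\<^sub>R A)"
  by (simp add: hermitian_iff sc_comp sc2)
lemma hermitian_zero: "hermitian 0"
  by (simp add: hermitian_iff)

lemma psd_add: "psd A \<Longrightarrow> psd B \<Longrightarrow> psd (A + B)"
  by (simp add: psd_iff hermitian_add qf_add add_nonneg_nonneg)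
lemma psd_scaleR: "psd A \<Longrightarrow> 0 \<le> c \<Longrightarrow> psd (c *\<^sub>R A)"
  by (simp add: psd_iff hermitian_scaleR qf_scaleR)
lemma psd_zero: "psd 0"
  by (simp add: psd_iff hermitian_zero qf_def)
lemma psd_sum: "finite J \<Longrightarrow> (\<And>j. j \<in> J \<Longrightarrow> psd (A j)) \<Longrightarrow> psd (\<Sum>j\<in>J. A j)"
  by (induction J rule: finite_induct) (auto simp: psd_zero psd_add)

lemma trace_scaleR: "trace (c *\<^sub>R (A::complex^'n^'n)) = of_real c * trace A"
  by (simp add: trace_def sum_distrib_left sc_comp sc2)
lemma trace_sum: "finite J \<Longrightarrow> trace (\<Sum>j\<in>J. (A j::complex^'n^'n)) = (\<Sum>j\<in>J. trace (A j))"
  by (induction J rule: finite_induct) (auto simp: trace_add trace_def sum.distrib)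


lemma ptA_add: "ptrace_A (K ** (X + Y)) = ptrace_A (K ** X) + ptrace_A (K ** Y)"
  by (simp add: ptrace_A_def matrix_add_ldistrib vec_eq_iff sum.distrib)

lemma ptA_scale: "ptrace_A (K ** (c *\<^sub>R (X::complex^('a::finite\<times>'b::finite)^('a\<times>'b)))) = c *\<^sub>R ptrace_A (K ** X)"
  by (simp add: ptrace_A_def vec_eq_iff sc_comp matrix_matrix_mult_def sum_distrib_left algebra_simps scaleR_sum_right)

lemma ptA_sum: "finite J \<Longrightarrow> ptrace_A (K ** (\<Sum>j\<in>J. c j *\<^sub>R (P j::complex^('a::finite\<times>'b::finite)^('a\<times>'b))))
   = (\<Sum>j\<in>J. c j *\<^sub>R ptrace_A (K ** P j))"
proof (induction J rule: finite_induct)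
  case empty
  then show ?case by (simp add: ptrace_A_def vec_eq_iff matrix_matrix_mult_def)
next
  case (insert x F)
  then show ?case by (simp add: ptA_add ptA_scale)
qed

lemma pt_formula:
  "ptrace_A (kron A (mat 1) ** proj (\<phi>::complex^('a::finite\<times>'b::finite))) =
     (\<chi> b b'. \<Sum>a\<in>UNIV. \<Sum>c\<in>UNIV. A$a$c * \<phi>$(c,b) * cnj (\<phi>$(a,b')))"
proof -
  have "(kron A (mat 1) ** proj \<phi>) $ (a,b) $ (a',b') = (\<Sum>c\<in>UNIV. A$a$c * \<phi>$(c,b) * cnj (\<phi>$(a',b')))"
    for a b a' b'
  proof -
    have "(kron A (mat 1) ** proj \<phi>) $ (a,b) $ (a',b') =
       (\<Sum>q\<in>UNIV \<times> UNIV. A$a$(fst q) * (mat 1 :: complex^'b^'b)$b$(snd q) * (\<phi>$q * cnj (\<phi>$(a',b'))))"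
      by (simp add: matrix_matrix_mult_def kron_def proj_def UNIV_Times_UNIV)
    also have "\<dots> = (\<Sum>c\<in>UNIV. \<Sum>d\<in>UNIV. A$a$c * (mat 1 :: complex^'b^'b)$b$d * (\<phi>$(c,d) * cnj (\<phi>$(a',b'))))"
      by (simp add: sum.cartesian_product case_prod_beta)
    also have "\<dots> = (\<Sum>c\<in>UNIV. A$a$c * \<phi>$(c,b) * cnj (\<phi>$(a',b')))"
      by (simp add: mat_def mult_ac if_distrib[where f="\<lambda>x. _ * x"] sum.delta cong: if_cong)
    finally show ?thesis .
  qed
  then show ?thesis by (simp add: ptrace_A_def vec_eq_iff)
qed

definition pt_op :: "'a::finite op \<Rightarrow> complex^('a\<times>'b::finite) \<Rightarrow> 'b op" where
  "pt_op A \<phi> = (\<chi> b b'. \<Sum>a\<in>UNIV. \<Sum>c\<in>UNIV. A$a$c * \<phi>$(c,b) * cnj (\<phi>$(a,b')))"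

lemma sum4_swap:
  "(\<Sum>b\<in>UNIV. \<Sum>b'\<in>UNIV. \<Sum>a\<in>UNIV. \<Sum>c\<in>UNIV. (f b b' a c :: complex)) =
   (\<Sum>a\<in>UNIV. \<Sum>c\<in>UNIV. \<Sum>b\<in>UNIV. \<Sum>b'\<in>UNIV. f b b' a c)"
proof -
  have "(\<Sum>b\<in>UNIV. \<Sum>b'\<in>UNIV. \<Sum>a\<in>UNIV. \<Sum>c\<in>UNIV. f b b' a c) =
        (\<Sum>b\<in>UNIV. \<Sum>a\<in>UNIV. \<Sum>c\<in>UNIV. \<Sum>b'\<in>UNIV. f b b' a c)"
    by (rule sum.cong[OF refl], subst sum.swap, rule sum.cong[OF refl], subst sum.swap, rule refl)
  also have "\<dots> = (\<Sum>a\<in>UNIV. \<Sum>b\<in>UNIV. \<Sum>c\<in>UNIV. \<Sum>b'\<in>UNIV. f b b' a c)"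
    by (rule sum.swap)
  also have "\<dots> = (\<Sum>a\<in>UNIV. \<Sum>c\<in>UNIV. \<Sum>b\<in>UNIV. \<Sum>b'\<in>UNIV. f b b' a c)"
    by (rule sum.cong[OF refl], rule sum.swap)
  finally show ?thesis .
qed

lemma qf_pt: "qf (pt_op A \<phi>) x = qf A (\<chi> c. \<Sum>b\<in>UNIV. \<phi>$(c,b) * cnj (x$b))"
proof -
  have "qf (pt_op A \<phi>) x = (\<Sum>b\<in>UNIV. \<Sum>b'\<in>UNIV. \<Sum>a\<in>UNIV. \<Sum>c\<in>UNIV.
            cnj (\<phi>$(a,b')) * x$b' * A$a$c * (\<phi>$(c,b) * cnj (x$b)))"
    by (simp add: qf_def pt_op_def sum_distrib_left sum_distrib_right mult_ac)
  also have "\<dots> = (\<Sum>a\<in>UNIV. \<Sum>c\<in>UNIV. \<Sum>b\<in>UNIV. \<Sum>b'\<in>UNIV.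
            cnj (\<phi>$(a,b')) * x$b' * A$a$c * (\<phi>$(c,b) * cnj (x$b)))"
    by (rule sum4_swap)
  also have "\<dots> = qf A (\<chi> c. \<Sum>b\<in>UNIV. \<phi>$(c,b) * cnj (x$b))"
    by (simp add: qf_def sum_distrib_left sum_distrib_right mult_ac)
      (rule sum.cong[OF refl], rule sum.cong[OF refl], rule sum.swap)
  finally show ?thesis .
qed

lemma herm_pt: "hermitian A \<Longrightarrow> hermitian (pt_op A \<phi>)"
  unfolding hermitian_iff
proof (intro allI)
  fix i j
  assume h: "\<forall>i j. cnj (A $ j $ i) = A $ i $ j"
  have "cnj (pt_op A \<phi> $ j $ i) = (\<Sum>a\<in>UNIV. \<Sum>c\<in>UNIV. A$c$a * \<phi>$(a,i) * cnj (\<phi>$(c,j)))"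
    using h by (simp add: pt_op_def mult_ac)
  also have "\<dots> = pt_op A \<phi> $ i $ j"
    by (simp add: pt_op_def) (rule sum.swap)
  finally show "cnj (pt_op A \<phi> $ j $ i) = pt_op A \<phi> $ i $ j" .
qed

lemma psd_pt: "psd A \<Longrightarrow> psd (pt_op A \<phi>)"
  by (simp add: psd_iff herm_pt qf_pt)

lemma pt_eq: "ptrace_A (kron A (mat 1) ** proj \<phi>) = pt_op A \<phi>"
  by (simp add: pt_formula pt_op_def)

lemma ptA_sum2: "finite J \<Longrightarrow> ptrace_A (kron A (mat 1) ** (\<Sum>j\<in>J. c j *\<^sub>R proj (\<phi> j))) = (\<Sum>j\<in>J. c j *\<^sub>R pt_op A (\<phi> j))"
  by (simp add: ptA_sum pt_eq)

lemma pt_op_add: "pt_op (A + B) \<phi> = pt_op A \<phi> + pt_op B \<phi>"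
  by (simp add: pt_op_def vec_eq_iff algebra_simps sum.distrib)

lemma pt_op_sumA: "finite N \<Longrightarrow> pt_op (\<Sum>n\<in>N. M n) \<phi> = (\<Sum>n\<in>N. pt_op (M n) \<phi>)"
proof (induction N rule: finite_induct)
  case empty
  then show ?case by (simp add: pt_op_def vec_eq_iff)
next
  case (insert x F)
  then show ?case by (simp add: pt_op_add)
qed

lemma pt_op_id: "pt_op (mat 1) \<phi> = ptrace_A (proj \<phi>)"
  by (simp add: pt_op_def ptrace_A_def proj_def vec_eq_iff mat_def if_distrib[where f="\<lambda>x. x * _"] sum.delta cong: if_cong)

lemma pt_sum_n: "povm M \<Longrightarrow> (\<Sum>n\<in>UNIV. pt_op (M n) \<phi>) = ptrace_A (proj \<phi>)"
  by (simp add: povm_def pt_op_sumA[symmetric] pt_op_id)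

lemma trace_pt: "unit_vec \<phi> \<Longrightarrow> trace (ptrace_A (proj (\<phi>::complex^('a::finite\<times>'b::finite)))) = 1"
proof -
  assume u: "unit_vec \<phi>"
  have "trace (ptrace_A (proj \<phi>)) = (\<Sum>b\<in>UNIV. \<Sum>a\<in>UNIV. cnj (\<phi>$(a,b)) * \<phi>$(a,b))"
    by (simp add: trace_def ptrace_A_def proj_def mult.commute)
  also have "\<dots> = (\<Sum>a\<in>UNIV. \<Sum>b\<in>UNIV. cnj (\<phi>$(a,b)) * \<phi>$(a,b))"
    by (rule sum.swap)
  also have "\<dots> = (\<Sum>q\<in>UNIV. cnj (\<phi>$q) * \<phi>$q)"
    by (simp add: sum.cartesian_product case_prod_beta UNIV_Times_UNIV[symmetric] del: UNIV_Times_UNIV)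
  also have "\<dots> = 1" using u by (simp add: unit_vec_def)
  finally show ?thesis .
qed

lemma assem_pt:
  assumes "unit_vec \<phi>" "\<forall>r. povm (MM r)"
  shows "assemblage (\<lambda>n r. pt_op (MM r n) \<phi>)"
  using assms unfolding assemblage_def
  by (auto simp: pt_sum_n trace_pt intro!: psd_pt) (auto simp: povm_def)

lemma assem_comb:
  assumes "finite J" "\<forall>j\<in>J. 0 \<le> w j" "(\<Sum>j\<in>J. w j) = 1" "\<forall>j\<in>J. assemblage (s j)"
  shows "assemblage (\<lambda>n r. \<Sum>j\<in>J. w j *\<^sub>R s j n r)"
proof -
  have sw: "(\<Sum>n\<in>UNIV. \<Sum>j\<in>J. w j *\<^sub>R s j n r) = (\<Sum>j\<in>J. w j *\<^sub>R (\<Sum>n\<in>UNIV. s j n r))" for r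
    by (simp add: scaleR_sum_right) (rule sum.swap)
  have e: "(\<Sum>n\<in>UNIV. s j n r) = (\<Sum>n\<in>UNIV. s j n r')" if "j \<in> J" for j r r'
    using assms(4) that unfolding assemblage_def by blast
  have t: "trace (\<Sum>n\<in>UNIV. s j n r) = 1" if "j \<in> J" for j r
    using assms(4) that unfolding assemblage_def by blast
  show ?thesis unfolding assemblage_def
  proof (intro conjI allI)
    fix n r show "psd (\<Sum>j\<in>J. w j *\<^sub>R s j n r)"
      using assms unfolding assemblage_def by (auto intro!: psd_sum psd_scaleR)
  next
    fix r r' show "(\<Sum>n\<in>UNIV. \<Sum>j\<in>J. w j *\<^sub>R s j n r) = (\<Sum>n\<in>UNIV. \<Sum>j\<in>J. w j *\<^sub>R s j n r')"
      unfolding sw using e by (intro sum.cong) auto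
  next
    fix r
    have "trace (\<Sum>n\<in>UNIV. \<Sum>j\<in>J. w j *\<^sub>R s j n r) = (\<Sum>j\<in>J. of_real (w j))"
      unfolding sw using assms(1) t by (simp add: trace_sum trace_scaleR)
    also have "\<dots> = 1" using assms(3) by (metis of_real_1 of_real_sum)
    finally show "trace (\<Sum>n\<in>UNIV. \<Sum>j\<in>J. w j *\<^sub>R s j n r) = 1" .
  qed
qed

lemma key:
  fixes \<sigma> :: "'n::finite \<Rightarrow> 'r::finite \<Rightarrow> complex^'b::finite^'b"
    and \<rho> :: "complex^('a::finite \<times> 'b)^('a \<times> 'b)"
    and MM :: "'r \<Rightarrow> 'n \<Rightarrow> 'a op" and k i :: nat and p :: "nat \<Rightarrow> real"
    and \<phi> :: "nat \<Rightarrow> complex^('a \<times> 'b)"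
  assumes ext: "extremal_assemblage \<sigma>"
    and MM: "\<forall>r. povm (MM r)"
    and sig: "\<forall>n r. \<sigma> n r = ptrace_A (kron (MM r n) (mat 1) ** \<rho>)"
    and dec: "\<forall>i<k. 0 \<le> p i \<and> unit_vec (\<phi> i)" "(\<Sum>i<k. p i) = 1"
      "\<rho> = (\<Sum>i<k. p i *\<^sub>R proj (\<phi> i))"
    and ik: "i < k" "0 < p i"
  shows "ptrace_A (proj (\<phi> i)) = marginal \<sigma>"
proof -
  define s where "s j = (\<lambda>n r. pt_op (MM r n) (\<phi> j))" for j
  have sigsum: "\<sigma> n r = (\<Sum>j<k. p j *\<^sub>R s j n r)" for n r
    unfolding sig[rule_format] dec(3) s_def by (rule ptA_sum2) simp
  have as: "assemblage (s j)" if "j < k" for j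
    unfolding s_def using assem_pt[OF _ MM] dec(1) that by blast
  define R where "R = {..<k} - {i}"
  have finR: "finite R" by (simp add: R_def)
  have split: "(\<Sum>j<k. f j) = f i + (\<Sum>j\<in>R. f j)" for f :: "nat \<Rightarrow> 'x::comm_monoid_add"
    unfolding R_def using ik(1) by (simp add: sum.remove)
  have psum: "(\<Sum>j\<in>R. p j) = 1 - p i" using split[of p] dec(2) by simp
  have pR: "\<forall>j\<in>R. 0 \<le> p j" using dec(1) by (auto simp: R_def)
  have "\<sigma> = s i"
  proof (cases "p i = 1")
    case True
    then have "\<forall>j\<in>R. p j = 0" using psum pR finR by (simp add: sum_nonneg_eq_0_iff)
    then show ?thesis using True by (auto simp: fun_eq_iff sigsum split)
  next
    case False
    then have pl: "p i < 1" using psum pR finR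
      by (metis diff_ge_0_iff_ge le_less sum_nonneg)
    define \<tau> where "\<tau> = (\<lambda>n r. \<Sum>j\<in>R. (p j / (1 - p i)) *\<^sub>R s j n r)"
    have ta: "assemblage \<tau>" unfolding \<tau>_def
    proof (rule assem_comb[OF finR])
      show "\<forall>j\<in>R. 0 \<le> p j / (1 - p i)" using pR pl by auto
      show "(\<Sum>j\<in>R. p j / (1 - p i)) = 1" using psum pl by (simp add: sum_divide_distrib[symmetric])
      show "\<forall>j\<in>R. assemblage (s j)" using as by (auto simp: R_def)
    qed
    have conv: "\<sigma> n r = p i *\<^sub>R s i n r + (1 - p i) *\<^sub>R \<tau> n r" for n r
    proof -
      have "(1 - p i) *\<^sub>R \<tau> n r = (\<Sum>j\<in>R. p j *\<^sub>R s j n r)"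
        unfolding \<tau>_def scaleR_sum_right using pl by (intro sum.cong) auto
      then show ?thesis by (simp add: sigsum split)
    qed
    have "s i = \<tau>"
      using ext ik(2) pl as[OF ik(1)] ta conv unfolding extremal_assemblage_def by blast
    then show ?thesis using conv by (auto simp: fun_eq_iff algebra_simps)
  qed
  then show ?thesis
    by (simp add: marginal_def s_def pt_sum_n MM)
qed

lemma sum_two_if:
  fixes i j :: "'a::finite"
  assumes "i \<noteq> j"
  shows "(\<Sum>l\<in>UNIV. (if l = i then f l else if l = j then g l else 0)) = f i + (g j :: complex)"
proof -
  have "(\<Sum>l\<in>UNIV. (if l = i then f l else if l = j then g l else 0)) =
        (\<Sum>l\<in>UNIV. (if l = i then f l else 0) + (if l = j then g l else 0))"
    using assms by (intro sum.cong) auto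
  also have "\<dots> = (\<Sum>l\<in>UNIV. (if l = i then f l else 0)) + (\<Sum>l\<in>UNIV. (if l = j then g l else 0))"
    by (rule sum.distrib)
  also have "\<dots> = f i + g j" by simp
  finally show ?thesis .
qed

lemma qf_two:
  assumes "i \<noteq> j"
  shows "qf M (\<chi> l. if l = i then a else if l = j then b else 0) =
     cnj a * M$i$i * a + cnj a * M$i$j * b + cnj b * M$j$i * a + cnj b * M$j$j * b"
proof -
  have e: "(\<Sum>m\<in>UNIV. cnj (if l = i then a else if l = j then b else 0) * M$l$m * (if m = i then a else if m = j then b else 0))
      = cnj (if l = i then a else if l = j then b else 0) * (M$l$i * a + M$l$j * b)" for l
  proof -
    have "(\<Sum>m\<in>UNIV. cnj (if l = i then a else if l = j then b else 0) * M$l$m * (if m = i then a else if m = j then b else 0))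
      = (\<Sum>m\<in>UNIV. (if m = i then cnj (if l = i then a else if l = j then b else 0) * M$l$m * a
           else if m = j then cnj (if l = i then a else if l = j then b else 0) * M$l$m * b else 0))"
      by (intro sum.cong) auto
    also have "\<dots> = cnj (if l = i then a else if l = j then b else 0) * (M$l$i * a + M$l$j * b)"
      using assms by (simp add: sum_two_if algebra_simps)
    finally show ?thesis .
  qed
  have "qf M (\<chi> l. if l = i then a else if l = j then b else 0) =
     (\<Sum>l\<in>UNIV. cnj (if l = i then a else if l = j then b else 0) * (M$l$i * a + M$l$j * b))"
    unfolding qf_def by (simp add: e)
  also have "\<dots> = (\<Sum>l\<in>UNIV. (if l = i then cnj a * (M$l$i * a + M$l$j * b)
        else if l = j then cnj b * (M$l$i * a + M$l$j * b) else 0))"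
    by (intro sum.cong) auto
  also have "\<dots> = cnj a * M$i$i * a + cnj a * M$i$j * b + cnj b * M$j$i * a + cnj b * M$j$j * b"
    using assms by (simp add: sum_two_if algebra_simps)
  finally show ?thesis .
qed

lemma qf_one: "qf M (\<chi> l. if l = i then 1 else 0) = M$i$i"
proof -
  have "(\<Sum>m\<in>UNIV. cnj (if l = i then 1 else 0) * M$l$m * (if m = i then 1 else 0)) =
     (if l = i then M$l$i else 0)" for l
  proof -
    have "(\<Sum>m\<in>UNIV. cnj (if l = i then 1 else 0) * M$l$m * (if m = i then 1 else 0)) =
      (\<Sum>m\<in>UNIV. if m = i then cnj (if l = i then 1 else 0) * M$l$m else 0)"
      by (intro sum.cong) auto
    also have "\<dots> = (if l = i then M$l$i else 0)" by simp
    finally show ?thesis .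
  qed
  then show ?thesis unfolding qf_def by simp
qed

lemma psd_diag:
  assumes "psd M"
  shows "M$i$i = of_real (Re (M$i$i)) \<and> 0 \<le> Re (M$i$i)"
proof
  have "cnj (M$i$i) = M$i$i" using assms by (simp add: psd_iff hermitian_iff)
  then have "Im (M$i$i) = 0" by (simp add: complex_eq_iff)
  then show "M$i$i = of_real (Re (M$i$i))" by (simp add: complex_eq_iff)
  show "0 \<le> Re (M$i$i)" using assms qf_one[of M i] unfolding psd_iff by metis
qed

lemma psd_diag0:
  assumes "psd M" "M$i$i = 0"
  shows "M$j$i = 0"
proof (rule ccontr)
  assume m: "M$j$i \<noteq> 0"
  then have ji: "j \<noteq> i" using assms by auto
  define m where "m = M$j$i"
  have mij: "M$i$j = cnj m" using assms(1) by (simp add: psd_iff hermitian_iff m_def)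
  define N where "N = (norm m)^2"
  have Npos: "N > 0" using m by (simp add: N_def m_def)
  have mm: "m * cnj m = of_real N" unfolding N_def by (rule complex_norm_square[symmetric])
  define t where "t = (Re (M$j$j) + 1) / (2 * N)"
  have "0 \<le> Re (qf M (\<chi> l. if l = i then - of_real t * cnj m else if l = j then 1 else 0))"
    using assms(1) by (simp add: psd_iff)
  also have "qf M (\<chi> l. if l = i then - of_real t * cnj m else if l = j then 1 else 0) =
     M$j$j - 2 * of_real t * of_real N"
  proof -
    have "qf M (\<chi> l. if l = i then - of_real t * cnj m else if l = j then 1 else 0) =
       cnj (- of_real t * cnj m) * cnj m + m * (- of_real t * cnj m) + M$j$j"
      using ji by (simp add: qf_two assms(2) mij m_def[symmetric])
    also have "\<dots> = M$j$j - 2 * of_real t * (m * cnj m)" by (simp add: algebra_simps)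
    finally show ?thesis by (simp add: mm)
  qed
  finally have "0 \<le> Re (M$j$j) - 2 * t * N" by simp
  moreover have "2 * t * N = Re (M$j$j) + 1" using Npos by (simp add: t_def)
  ultimately show False by simp
qed

definition bf :: "'i::finite op \<Rightarrow> complex^'i \<Rightarrow> complex^'i \<Rightarrow> complex" where
  "bf M x y = (\<Sum>l\<in>UNIV. \<Sum>m\<in>UNIV. cnj (x$l) * M$l$m * y$m)"

lemma qf_plus: "qf M (x + y) = qf M x + qf M y + bf M x y + bf M y x"
  by (simp add: qf_def bf_def algebra_simps sum.distrib)

lemma inner_delta: fixes i :: "'a::finite" shows "(\<Sum>m\<in>UNIV. f m * (if m = i then t else 0)) = f i * (t::complex)"
proof -
  have "(\<Sum>m\<in>UNIV. f m * (if m = i then t else 0)) = (\<Sum>m\<in>UNIV. if m = i then f m * t else 0)"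
    by (intro sum.cong) auto
  then show ?thesis by simp
qed

lemma inner_delta2: fixes i :: "'a::finite" shows "(\<Sum>m\<in>UNIV. cnj (if m = i then t else 0) * f m) = cnj t * (f i::complex)"
proof -
  have "(\<Sum>m\<in>UNIV. cnj (if m = i then t else 0) * f m) = (\<Sum>m\<in>UNIV. if m = i then cnj t * f m else 0)"
    by (intro sum.cong) auto
  then show ?thesis by simp
qed

lemma qf_delta: "qf M (\<chi> l. if l = i then t else 0) = cnj t * M$i$i * t"
proof -
  have "qf M (\<chi> l. if l = i then t else 0) = (\<Sum>l\<in>UNIV. cnj (if l = i then t else 0) * (M$l$i * t))"
    unfolding qf_def vec_lambda_beta inner_delta by (simp add: mult.assoc)
  then show ?thesis by (simp add: inner_delta2 mult.assoc)
qed

lemma bf_delta_r: "bf M x (\<chi> l. if l = i then t else 0) = (\<Sum>l\<in>UNIV. cnj (x$l) * M$l$i) * t"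
  by (simp add: bf_def inner_delta sum_distrib_right)

lemma bf_delta_l: "bf M (\<chi> l. if l = i then t else 0) x = cnj t * (\<Sum>m\<in>UNIV. M$i$m * x$m)"
proof -
  have "bf M (\<chi> l. if l = i then t else 0) x = (\<Sum>l\<in>UNIV. cnj (if l = i then t else 0) * (\<Sum>m\<in>UNIV. M$l$m * x$m))"
    by (simp add: bf_def sum_distrib_left mult.assoc)
  then show ?thesis by (simp add: inner_delta2)
qed

lemma qf_proj: "qf (proj v) x = cnj (\<Sum>m\<in>UNIV. cnj (v$m) * x$m) * (\<Sum>m\<in>UNIV. cnj (v$m) * x$m)"
  by (simp add: qf_def proj_def sum_product mult_ac sum_distrib_left) (rule sum.swap)

lemma hermitian_proj: "hermitian (proj v)"
  by (simp add: hermitian_iff proj_def mult.commute)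


lemma schur:
  assumes psdM: "psd M" and dd: "d = Re (M$i$i)" and dpos: "0 < d"
  shows "psd (M - proj (\<chi> l. M$l$i / of_real (sqrt d)))"
proof -
  define v where "v = (\<chi> l. M$l$i / of_real (sqrt d))"
  have Mii: "M$i$i = of_real d" using psd_diag[OF psdM, of i] dd by simp
  have herm: "cnj (M$m$l) = M$l$m" for l m using psdM by (simp add: psd_iff hermitian_iff)
  have sd: "of_real (sqrt d) * of_real (sqrt d) = (of_real d :: complex)"
    using dpos by (simp flip: of_real_mult)
  have "0 \<le> Re (qf (M - proj v) x)" for x
  proof -
    define a where "a = (\<Sum>m\<in>UNIV. M$i$m * x$m)"
    have g: "(\<Sum>m\<in>UNIV. cnj (v$m) * x$m) = a / of_real (sqrt d)"
      unfolding a_def v_def by (simp add: herm sum_divide_distrib)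
    have P: "qf (proj v) x = cnj a * a / of_real d"
      unfolding qf_proj g using sd by (simp add: field_simps)
    have cross: "(\<Sum>l\<in>UNIV. cnj (x$l) * M$l$i) = cnj a"
      unfolding a_def by (simp add: herm mult.commute)
    define t where "t = - a / of_real d"
    have ct: "cnj t = - cnj a / of_real d" by (simp add: t_def)
    have "qf M (x + (\<chi> l. if l = i then t else 0)) = qf M x + cnj t * of_real d * t + cnj a * t + cnj t * a"
      by (simp add: qf_plus qf_delta bf_delta_r bf_delta_l cross Mii a_def[symmetric])
    also have "\<dots> = qf M x - cnj a * a / of_real d"
      unfolding ct t_def using dpos by (simp add: field_simps)
    also have "\<dots> = qf (M - proj v) x" by (simp add: qf_diff P)
    finally show ?thesis using psdM by (metis psd_iff)
  qed
  moreover have "hermitian (M - proj v)"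
    using psdM by (simp add: psd_iff hermitian_diff hermitian_proj)
  ultimately show ?thesis unfolding v_def[symmetric] psd_iff by blast
qed

lemma decomp: "psd (M::'i::finite op) \<Longrightarrow> \<exists>k (v::nat \<Rightarrow> complex^'i). M = (\<Sum>j<k. proj (v j))"
proof (induction "card {i. M$i$i \<noteq> 0}" arbitrary: M rule: less_induct)
  case less
  note psdM = less.prems
  have herm: "cnj (M$m$l) = M$l$m" for l m using psdM by (simp add: psd_iff hermitian_iff)
  have z: "M$l$m = 0" if "M$l$l = 0" for l m
  proof -
    have "M$m$l = 0" using psd_diag0[OF psdM that] .
    then show ?thesis using herm[of l m] by simp
  qed
  show ?case
  proof (cases "\<exists>i. M$i$i \<noteq> 0")
    case False
    then have "M = 0" using psd_diag0[OF psdM] by (auto simp: vec_eq_iff)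
    then show ?thesis by (intro exI[of _ 0]) simp
  next
    case True
    then obtain i where i: "M$i$i \<noteq> 0" by blast
    define d where "d = Re (M$i$i)"
    have Mii: "M$i$i = of_real d" and d0: "0 \<le> d" using psd_diag[OF psdM, of i] by (auto simp: d_def)
    have dpos: "0 < d" using i Mii d0 by (auto simp: less_le)
    define v where "v = (\<chi> l. M$l$i / of_real (sqrt d))"
    define M' where "M' = M - proj v"
    have psd': "psd M'" unfolding M'_def v_def using schur[OF psdM d_def dpos] .
    have sd: "of_real (sqrt d) * of_real (sqrt d) = (of_real d :: complex)"
      using dpos by (simp flip: of_real_mult)
    have "M'$i$i = 0"
      unfolding M'_def v_def using dpos sd by (simp add: proj_def Mii field_simps)
    moreover have "M'$l$l = 0" if "M$l$l = 0" for l
      unfolding M'_def v_def by (simp add: proj_def z[OF that] that)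
    ultimately have sub: "{l. M'$l$l \<noteq> 0} \<subseteq> {l. M$l$l \<noteq> 0} - {i}" by auto
    have "card {l. M'$l$l \<noteq> 0} < card {l. M$l$l \<noteq> 0}"
    proof -
      have "card {l. M'$l$l \<noteq> 0} \<le> card ({l. M$l$l \<noteq> 0} - {i})" using sub by (intro card_mono) auto
      also have "\<dots> < card {l. M$l$l \<noteq> 0}" using i by (intro card_Diff1_less) auto
      finally show ?thesis .
    qed
    then have "\<exists>k (w::nat \<Rightarrow> complex^'i). M' = (\<Sum>j<k. proj (w j))" by (rule less.hyps[OF _ psd'])
    then obtain k :: nat and w :: "nat \<Rightarrow> complex^'i" where w: "M' = (\<Sum>j<k. proj (w j))" by blast
    have "M = (\<Sum>j<Suc k. proj ((w(k := v)) j))"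
      using w by (simp add: M'_def) (metis diff_add_cancel)
    then show ?thesis by blast
  qed
qed

definition nr :: "complex^'i::finite \<Rightarrow> real" where
  "nr w = (\<Sum>l\<in>UNIV. (cmod (w$l))^2)"

lemma nr_eq: "(\<Sum>l\<in>UNIV. cnj (w$l) * w$l) = of_real (nr w)"
  unfolding nr_def of_real_sum by (intro sum.cong refl) (metis complex_norm_square mult.commute)

lemma nr_nonneg: "0 \<le> nr w" by (simp add: nr_def sum_nonneg)

lemma nr_zero: "nr w = 0 \<Longrightarrow> w$l = 0"
  unfolding nr_def by (subst (asm) sum_nonneg_eq_0_iff) auto

lemma trace_proj: "trace (proj w) = of_real (nr w)"
  by (simp add: trace_def proj_def nr_eq[symmetric] mult.commute)

lemma unit_e0: "unit_vec ((\<chi> l. if l = a then 1 else 0) :: complex^'i::finite)"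
proof -
  have "(\<Sum>l\<in>UNIV. cnj (if l = a then 1 else 0) * (if l = a then 1 else 0 :: complex)) =
        (\<Sum>l\<in>UNIV. if l = a then 1 else 0)" by (intro sum.cong) auto
  then show ?thesis by (simp add: unit_vec_def)
qed

lemma unit_scale:
  assumes "0 < nr w"
  shows "unit_vec ((1 / sqrt (nr w)) *\<^sub>R w)"
proof -
  have "(\<Sum>l\<in>UNIV. cnj (((1 / sqrt (nr w)) *\<^sub>R w)$l) * ((1 / sqrt (nr w)) *\<^sub>R w)$l) =
        of_real (1 / sqrt (nr w) * (1 / sqrt (nr w))) * (\<Sum>l\<in>UNIV. cnj (w$l) * w$l)"
  proof -
    have "cnj (((1 / sqrt (nr w)) *\<^sub>R w)$l) * ((1 / sqrt (nr w)) *\<^sub>R w)$l =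
      of_real (1 / sqrt (nr w) * (1 / sqrt (nr w))) * (cnj (w$l) * w$l)" for l
      by (simp only: vector_scaleR_component sc2 complex_cnj_mult complex_cnj_complex_of_real of_real_mult) (simp add: mult_ac)
    then show ?thesis by (simp add: sum_distrib_left)
  qed
  also have "\<dots> = of_real (1 / sqrt (nr w) * (1 / sqrt (nr w)) * nr w)" by (simp add: nr_eq)
  also have "\<dots> = 1" using assms by simp
  finally show ?thesis by (simp add: unit_vec_def)
qed

lemma proj_scale: "proj (c *\<^sub>R w) = (c * c) *\<^sub>R proj w"
  by (simp add: proj_def vec_eq_iff sc2 sc_comp mult_ac)

lemma pure_decomp:
  assumes "density (\<rho>::'i::finite op)"
  shows "\<exists>k (p::nat \<Rightarrow> real) (\<phi>::nat \<Rightarrow> complex^'i). (\<forall>i<k. 0 \<le> p i \<and> unit_vec (\<phi> i)) \<and> (\<Sum>i<k. p i) = 1 \<and>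
     (\<Sum>i<k. p i *\<^sub>R proj (\<phi> i)) = \<rho>"
proof -
  obtain k and v :: "nat \<Rightarrow> complex^'i" where v: "\<rho> = (\<Sum>j<k. proj (v j))"
    using decomp assms unfolding density_def by blast
  define p where "p j = nr (v j)" for j
  define \<phi> where "\<phi> j = (if p j = 0 then (\<chi> l. if l = undefined then 1 else 0) else (1 / sqrt (p j)) *\<^sub>R v j)" for j
  have 1: "\<forall>i<k. 0 \<le> p i \<and> unit_vec (\<phi> i)"
    by (auto simp: p_def \<phi>_def nr_nonneg unit_e0 unit_scale less_le)
  have 2: "p j *\<^sub>R proj (\<phi> j) = proj (v j)" for j
  proof (cases "p j = 0")
    case True
    then have "v j = 0" by (simp add: p_def vec_eq_iff nr_zero)
    then show ?thesis using True by (simp add: proj_def vec_eq_iff)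
  next
    case False
    then have "p j > 0" using nr_nonneg[of "v j"] by (simp add: p_def)
    then show ?thesis using False
      by (simp add: \<phi>_def proj_scale)
  qed
  have 3: "(\<Sum>i<k. p i *\<^sub>R proj (\<phi> i)) = \<rho>" using v 2 by simp
  have "of_real (\<Sum>i<k. p i) = trace \<rho>"
    unfolding v by (simp add: trace_sum trace_proj p_def)
  then have 4: "(\<Sum>i<k. p i) = 1" using assms unfolding density_def by (metis of_real_eq_1_iff)
  show ?thesis using 1 3 4 by blast
qed

theorem theorem1:
  fixes \<sigma> :: "'n::finite \<Rightarrow> 'r::finite \<Rightarrow> complex^'b::finite^'b"
    and \<rho> :: "complex^('a::finite \<times> 'b)^('a \<times> 'b)"
  assumes "extremal_assemblage \<sigma>"
    and "realizes \<rho> \<sigma>"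
  shows "ent_formation \<rho> = vn_entropy (marginal \<sigma>)"
proof -
  have dens: "density \<rho>" using assms(2) by (simp add: realizes_def)
  have "\<forall>r. \<exists>M :: 'n \<Rightarrow> 'a op. povm M \<and> (\<forall>n. \<sigma> n r = ptrace_A (kron (M n) (mat 1) ** \<rho>))"
    using assms(2) by (simp add: realizes_def)
  then obtain MM :: "'r \<Rightarrow> 'n \<Rightarrow> 'a op" where MM: "\<forall>r. povm (MM r)"
    and sig: "\<forall>n r. \<sigma> n r = ptrace_A (kron (MM r n) (mat 1) ** \<rho>)"
    by metis
  define E where "E = vn_entropy (marginal \<sigma>)"
  define S where "S = {(\<Sum>i<k. p i * vn_entropy (ptrace_A (proj (\<phi> i)))) | (k::nat) (p::nat \<Rightarrow> real) (\<phi>::nat \<Rightarrow> complex^('a \<times> 'b)).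
       (\<forall>i<k. 0 \<le> p i \<and> unit_vec (\<phi> i)) \<and> (\<Sum>i<k. p i) = 1 \<and>
       (\<Sum>i<k. p i *\<^sub>R proj (\<phi> i)) = \<rho>}"
  have sub: "S \<subseteq> {E}"
    proof
      fix x assume "x \<in> S"
      then obtain k :: nat and p :: "nat \<Rightarrow> real" and \<phi> :: "nat \<Rightarrow> complex^('a \<times> 'b)"
        where x: "x = (\<Sum>i<k. p i * vn_entropy (ptrace_A (proj (\<phi> i))))"
        and d1: "\<forall>i<k. 0 \<le> p i \<and> unit_vec (\<phi> i)" and d2: "(\<Sum>i<k. p i) = 1"
        and d3: "(\<Sum>i<k. p i *\<^sub>R proj (\<phi> i)) = \<rho>"
        unfolding S_def by blast
      have "x = (\<Sum>i<k. p i * E)"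
        unfolding x
      proof (intro sum.cong refl)
        fix i assume "i \<in> {..<k}"
        then have ik: "i < k" by simp
        show "p i * vn_entropy (ptrace_A (proj (\<phi> i))) = p i * E"
        proof (cases "p i = 0")
          case False
          then have "0 < p i" using d1 ik by (simp add: less_le)
          then have "ptrace_A (proj (\<phi> i)) = marginal \<sigma>"
            using key[OF assms(1) MM sig d1 d2 d3[symmetric] ik] by blast
          then show ?thesis by (simp add: E_def)
        qed simp
      qed
      also have "\<dots> = E" using d2 by (simp add: sum_distrib_right[symmetric])
      finally show "x \<in> {E}" by simp
    qed
  have "S = {E}"
  proof
    show "S \<subseteq> {E}" by (rule sub)
  next
    obtain k :: nat and p :: "nat \<Rightarrow> real" and \<phi> :: "nat \<Rightarrow> complex^('a \<times> 'b)"
      where d: "(\<forall>i<k. 0 \<le> p i \<and> unit_vec (\<phi> i)) \<and> (\<Sum>i<k. p i) = 1 \<and> (\<Sum>i<k. p i *\<^sub>R proj (\<phi> i)) = \<rho>"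
      using pure_decomp[OF dens] by blast
    then have "(\<Sum>i<k. p i * vn_entropy (ptrace_A (proj (\<phi> i)))) \<in> S"
      unfolding S_def by blast
    then show "{E} \<subseteq> S" using sub by auto
  qed
  then have "ent_formation \<rho> = Inf {E}"
    unfolding ent_formation_def S_def by simp
  then show ?thesis by (simp add: E_def)
qed

end
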